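(* Let $\Phi=(\phi_1,\dots,\phi_6)$ be an admissible datum, let $\Phi^a=\sum_{j=1}^6(-1)^j\phi_j$, let $\psi_a$ be the solution of $\Delta\psi_a=0$ in $D$, $\psi_a=\Phi^a$ on $\partial D$, and let $p\in D$. Then the conditions \[\int_{\partial D}\Phi^a\Big(\frac{\zeta+p}{\overline p\,\zeta+1}\Big)ds_\zeta=0,\quad \int_{\partial D}\Phi^a\Big(\frac{\zeta+p}{\overline p\,\zeta+1}\Big)\zeta_r\,ds_\zeta=0\ (r=1,2),\] \[\int_{\partial D}\Phi^a\Big(\frac{\zeta+p}{\overline p\,\zeta+1}\Big)\zeta_1^2\,ds_\zeta=0,\quad \int_{\partial D}\Phi^a\Big(\frac{\zeta+p}{\overline p\,\zeta+1}\Big)\zeta_1\zeta_2\,ds_\zeta=0\] (with $\zeta=(\zeta_1,\zeta_2)$) hold if and only if $\psi_a(p)=0$, $\nabla\psi_a(p)=(0,0)$ and $H\psi_a(p)=0$, where $H\psi_a=(\partial^2_{x_ix_j}\psi_a)_{i,j=1,2}$ is the Hessian matrix of $\psi_a$.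
   Context: Let $D=\{x\in\mathbb{R}^2:|x|<1\}$ be the open unit disk; points $(x_1,x_2)\in\mathbb{R}^2$ are identified with complex numbers $x_1+ix_2$, $\overline p$ is complex conjugation, and $ds_\zeta$ is arc length on $\partial D$. A $6$-tuple $\Phi=(\phi_1,\dots,\phi_6)$ is an admissible datum if $\phi_i\in W^{1,\infty}(\partial D)$, $\phi_i\ge 0$, $\phi_i\phi_j=0$ a.e. on $\partial D$ for $i\ne j$, each set $\{\phi_i>0\}\subset\partial D$ is a nonempty open connected arc, and $\sum_{i=1}^6\phi_i$ vanishes at exactly $6$ points of $\partial D$ (the endpoints of these arcs). *)

theory Defs
  imports "HOL-Analysis.Analysis"
begin

text \<open>Points of the plane are complex numbers; the unit circle is sphere 0 1,
  parametrised by arc length via cis on [0, 2 pi].\<close>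

text \<open>Partial derivative of a real function on the plane in direction v
  (v = 1 gives d/dx1, v = i gives d/dx2).\<close>
definition dpart :: "complex \<Rightarrow> (complex \<Rightarrow> real) \<Rightarrow> complex \<Rightarrow> real" where
  "dpart v f x = frechet_derivative f (at x) v"

definition harmonic_on :: "complex set \<Rightarrow> (complex \<Rightarrow> real) \<Rightarrow> bool" where
  "harmonic_on S f \<longleftrightarrow> open S \<and>
     (\<forall>x\<in>S. f differentiable (at x)) \<and>
     (\<forall>v\<in>{1, \<i>}. \<forall>x\<in>S. dpart v f differentiable (at x)) \<and>
     (\<forall>u\<in>{1, \<i>}. \<forall>v\<in>{1, \<i>}. continuous_on S (dpart u (dpart v f))) \<and>
     (\<forall>x\<in>S. dpart 1 (dpart 1 f) x + dpart \<i> (dpart \<i> f) x = 0)"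

definition admissible_datum :: "(nat \<Rightarrow> complex \<Rightarrow> real) \<Rightarrow> bool" where
  "admissible_datum \<phi> \<longleftrightarrow>
     (\<forall>i\<in>{1..6}. (\<exists>C. C-lipschitz_on (sphere 0 1) (\<phi> i))) \<and>
     (\<forall>i\<in>{1..6}. \<forall>z\<in>sphere 0 1. \<phi> i z \<ge> 0) \<and>
     (\<forall>i\<in>{1..6}. \<forall>j\<in>{1..6}. i \<noteq> j \<longrightarrow>
        {\<theta>\<in>{0..2*pi}. \<phi> i (cis \<theta>) * \<phi> j (cis \<theta>) \<noteq> 0} \<in> null_sets lborel) \<and>
     (\<forall>i\<in>{1..6}. let A = {z\<in>sphere 0 1. \<phi> i z > 0} in
        A \<noteq> {} \<and> openin (top_of_set (sphere 0 1)) A \<and> connected A) \<and>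
     card {z\<in>sphere 0 1. (\<Sum>i=1..6. \<phi> i z) = 0} = 6"

definition alt_datum :: "(nat \<Rightarrow> complex \<Rightarrow> real) \<Rightarrow> complex \<Rightarrow> real" where
  "alt_datum \<phi> z = (\<Sum>j=1..6. (-1)^j * \<phi> j z)"

definition dirichlet_solution :: "(complex \<Rightarrow> real) \<Rightarrow> (complex \<Rightarrow> real) \<Rightarrow> bool" where
  "dirichlet_solution g \<psi> \<longleftrightarrow> harmonic_on (ball 0 1) \<psi> \<and>
     continuous_on (cball 0 1) \<psi> \<and> (\<forall>z\<in>sphere 0 1. \<psi> z = g z)"

definition circle_integral :: "(complex \<Rightarrow> real) \<Rightarrow> real" where
  "circle_integral h = integral {0..2*pi} (\<lambda>\<theta>. h (cis \<theta>))"

end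

theory Submission
  imports Defs "HOL-Complex_Analysis.Complex_Analysis"
begin


lemma fd_linear:
  assumes "(f has_derivative L) F"
  shows "L (c *\<^sub>R x) = c *\<^sub>R L x" "L (x + y) = L x + L y"
  using has_derivative_bounded_linear[OF assms, THEN bounded_linear.linear]
  by (simp_all add: linear_scale linear_add)

lemma fd_decomp:
  fixes f :: "complex \<Rightarrow> 'b::real_normed_vector"
  assumes "(f has_derivative L) F"
  shows "L h = Re h *\<^sub>R L 1 + Im h *\<^sub>R L \<i>"
proof -
  have "h = Re h *\<^sub>R 1 + Im h *\<^sub>R \<i>" by (simp add: complex_eq_iff)
  then have "L h = L (Re h *\<^sub>R 1 + Im h *\<^sub>R \<i>)" by simp
  also have "\<dots> = Re h *\<^sub>R L 1 + Im h *\<^sub>R L \<i>" using fd_linear[OF assms] by simp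
  finally show ?thesis .
qed

lemma dpart_line:
  fixes f :: "complex \<Rightarrow> real"
  assumes "f differentiable (at (a + of_real t * v))"
  shows "((\<lambda>s. f (a + of_real s * v)) has_real_derivative dpart v f (a + of_real t * v)) (at t)"
proof -
  define w where "w = a + of_real t * v"
  have L: "(f has_derivative frechet_derivative f (at w)) (at w)"
    using assms frechet_derivative_works w_def by blast
  have P: "((\<lambda>s. a + of_real s * v) has_derivative (\<lambda>h. of_real h * v)) (at t)"
    by (auto intro!: derivative_eq_intros)
  have "((\<lambda>s. f (a + of_real s * v)) has_derivative (\<lambda>h. frechet_derivative f (at w) (of_real h * v))) (at t)"
    using diff_chain_at[OF P] L w_def by (simp add: o_def)
  moreover have "frechet_derivative f (at w) (of_real h * v) = dpart v f w * h" for h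
    using fd_linear(1)[OF L, of h v] by (simp add: dpart_def scaleR_conv_of_real)
  ultimately show ?thesis unfolding has_field_derivative_def w_def by simp
qed



lemma clairaut:
  fixes \<psi> :: "complex \<Rightarrow> real"
  assumes S: "open S" "z \<in> S"
  and d0: "\<And>x. x\<in>S \<Longrightarrow> \<psi> differentiable (at x)"
  and d1: "\<And>x. x\<in>S \<Longrightarrow> dpart 1 \<psi> differentiable (at x)"
  and di: "\<And>x. x\<in>S \<Longrightarrow> dpart \<i> \<psi> differentiable (at x)"
  and cb: "continuous_on S (dpart \<i> (dpart 1 \<psi>))"
  and cc: "continuous_on S (dpart 1 (dpart \<i> \<psi>))"
  shows "dpart \<i> (dpart 1 \<psi>) z = dpart 1 (dpart \<i> \<psi>) z"
proof (rule ccontr)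
  define b where "b = dpart \<i> (dpart 1 \<psi>)"
  define c where "c = dpart 1 (dpart \<i> \<psi>)"
  assume ne: "dpart \<i> (dpart 1 \<psi>) z \<noteq> dpart 1 (dpart \<i> \<psi>) z"
  define e where "e = \<bar>b z - c z\<bar> / 2"
  have e: "e > 0" using ne by (simp add: e_def b_def c_def)
  obtain r0 where r0: "r0 > 0" "ball z r0 \<subseteq> S" using S open_contains_ball by blast
  obtain r1 where r1: "r1 > 0" "\<forall>w\<in>S. dist w z < r1 \<longrightarrow> dist (b w) (b z) < e"
    using cb S(2) e unfolding continuous_on_iff b_def by blast
  obtain r2 where r2: "r2 > 0" "\<forall>w\<in>S. dist w z < r2 \<longrightarrow> dist (c w) (c z) < e"
    using cc S(2) e unfolding continuous_on_iff c_def by blast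
  define h where "h = min r0 (min r1 r2) / 3"
  have h: "h > 0" using r0 r1 r2 by (simp add: h_def)
  define P where "P s t = z + of_real s + of_real t * \<i>" for s t :: real
  have Pd: "dist (P s t) z < min r0 (min r1 r2)" if "0 \<le> s" "s \<le> h" "0 \<le> t" "t \<le> h" for s t
  proof -
    have "dist (P s t) z = norm (of_real s + of_real t * \<i>)" by (simp add: P_def dist_norm)
    also have "\<dots> \<le> norm (of_real s :: complex) + norm (of_real t * \<i>)" by (rule norm_triangle_ineq)
    also have "\<dots> \<le> 2 * h" using that by (simp add: norm_mult)
    also have "\<dots> < min r0 (min r1 r2)" using h r0 r1 r2 unfolding h_def by linarith
    finally show ?thesis .
  qed
  have PS: "P s t \<in> S" if "0 \<le> s" "s \<le> h" "0 \<le> t" "t \<le> h" for s t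
    using Pd[OF that] r0 by (auto simp: dist_commute subset_iff)
  have Pb: "\<bar>b (P s t) - b z\<bar> < e" if "0 \<le> s" "s \<le> h" "0 \<le> t" "t \<le> h" for s t
    using Pd[OF that] PS[OF that] r1 by (auto simp: dist_real_def)
  have Pc: "\<bar>c (P s t) - c z\<bar> < e" if "0 \<le> s" "s \<le> h" "0 \<le> t" "t \<le> h" for s t
    using Pd[OF that] PS[OF that] r2 by (auto simp: dist_real_def)
  define \<Delta> where "\<Delta> = \<psi> (P h h) - \<psi> (P h 0) - \<psi> (P 0 h) + \<psi> (P 0 0)"
  have "\<exists>x>0. x < h \<and> (\<psi> (P h h) - \<psi> (P h 0)) - (\<psi> (P 0 h) - \<psi> (P 0 0))
          = (h - 0) * (dpart 1 \<psi> (P x h) - dpart 1 \<psi> (P x 0))"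
  proof (rule MVT2[OF h, of "\<lambda>s. \<psi> (P s h) - \<psi> (P s 0)"])
    fix s assume s: "0 \<le> s" "s \<le> h"
    have e1: "(\<lambda>s. \<psi> (P s h)) = (\<lambda>s. \<psi> ((z + of_real h * \<i>) + of_real s * 1))"
      by (simp add: P_def algebra_simps)
    have e2: "(\<lambda>s. \<psi> (P s 0)) = (\<lambda>s. \<psi> (z + of_real s * 1))"
      by (simp add: P_def algebra_simps)
    have q1: "(z + of_real h * \<i>) + of_real s * 1 = P s h" by (simp add: P_def algebra_simps)
    have q2: "z + of_real s * 1 = P s 0" by (simp add: P_def algebra_simps)
    have "((\<lambda>s. \<psi> (P s h)) has_real_derivative dpart 1 \<psi> (P s h)) (at s)"
      using dpart_line[of \<psi> "z + of_real h * \<i>" s 1] d0[OF PS[of s h]] s h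
      unfolding e1 q1 by simp
    moreover have "((\<lambda>s. \<psi> (P s 0)) has_real_derivative dpart 1 \<psi> (P s 0)) (at s)"
      using dpart_line[of \<psi> z s 1] d0[OF PS[of s 0]] s h
      unfolding e2 q2 by simp
    ultimately show "((\<lambda>s. \<psi> (P s h) - \<psi> (P s 0)) has_real_derivative
        (dpart 1 \<psi> (P s h) - dpart 1 \<psi> (P s 0))) (at s)"
      by (rule DERIV_diff)
  qed
  then obtain x where x: "0 < x" "x < h" "\<Delta> = h * (dpart 1 \<psi> (P x h) - dpart 1 \<psi> (P x 0))"
    unfolding \<Delta>_def by auto
  have "\<exists>y>0. y < h \<and> dpart 1 \<psi> (P x h) - dpart 1 \<psi> (P x 0) = (h - 0) * b (P x y)"
  proof (rule MVT2[OF h, of "\<lambda>t. dpart 1 \<psi> (P x t)"])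
    fix t assume t: "0 \<le> t" "t \<le> h"
    have e1: "(\<lambda>t. dpart 1 \<psi> (P x t)) = (\<lambda>t. dpart 1 \<psi> ((z + of_real x) + of_real t * \<i>))"
      by (simp add: P_def algebra_simps)
    have q1: "(z + of_real x) + of_real t * \<i> = P x t" by (simp add: P_def algebra_simps)
    show "((\<lambda>t. dpart 1 \<psi> (P x t)) has_real_derivative b (P x t)) (at t)"
      using dpart_line[of "dpart 1 \<psi>" "z + of_real x" t \<i>] d1[OF PS[of x t]] x t
      unfolding e1 q1 b_def by simp
  qed
  then obtain y where y: "0 < y" "y < h" "\<Delta> = h * h * b (P x y)"
    using x by auto
  have "\<exists>y'>0. y' < h \<and> (\<psi> (P h h) - \<psi> (P 0 h)) - (\<psi> (P h 0) - \<psi> (P 0 0))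
          = (h - 0) * (dpart \<i> \<psi> (P h y') - dpart \<i> \<psi> (P 0 y'))"
  proof (rule MVT2[OF h, of "\<lambda>t. \<psi> (P h t) - \<psi> (P 0 t)"])
    fix t assume t: "0 \<le> t" "t \<le> h"
    have e1: "(\<lambda>t. \<psi> (P h t)) = (\<lambda>t. \<psi> ((z + of_real h) + of_real t * \<i>))"
      by (simp add: P_def algebra_simps)
    have e2: "(\<lambda>t. \<psi> (P 0 t)) = (\<lambda>t. \<psi> (z + of_real t * \<i>))"
      by (simp add: P_def algebra_simps)
    have q1: "(z + of_real h) + of_real t * \<i> = P h t" by (simp add: P_def algebra_simps)
    have q2: "z + of_real t * \<i> = P 0 t" by (simp add: P_def algebra_simps)
    have "((\<lambda>t. \<psi> (P h t)) has_real_derivative dpart \<i> \<psi> (P h t)) (at t)"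
      using dpart_line[of \<psi> "z + of_real h" t \<i>] d0[OF PS[of h t]] t h
      unfolding e1 q1 by simp
    moreover have "((\<lambda>t. \<psi> (P 0 t)) has_real_derivative dpart \<i> \<psi> (P 0 t)) (at t)"
      using dpart_line[of \<psi> z t \<i>] d0[OF PS[of 0 t]] t h
      unfolding e2 q2 by simp
    ultimately show "((\<lambda>t. \<psi> (P h t) - \<psi> (P 0 t)) has_real_derivative
        (dpart \<i> \<psi> (P h t) - dpart \<i> \<psi> (P 0 t))) (at t)"
      by (rule DERIV_diff)
  qed
  then obtain y' where y': "0 < y'" "y' < h" "\<Delta> = h * (dpart \<i> \<psi> (P h y') - dpart \<i> \<psi> (P 0 y'))"
    unfolding \<Delta>_def by (auto simp: algebra_simps)
  have "\<exists>x'>0. x' < h \<and> dpart \<i> \<psi> (P h y') - dpart \<i> \<psi> (P 0 y') = (h - 0) * c (P x' y')"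
  proof (rule MVT2[OF h, of "\<lambda>s. dpart \<i> \<psi> (P s y')"])
    fix s assume s: "0 \<le> s" "s \<le> h"
    have e1: "(\<lambda>s. dpart \<i> \<psi> (P s y')) = (\<lambda>s. dpart \<i> \<psi> ((z + of_real y' * \<i>) + of_real s * 1))"
      by (simp add: P_def algebra_simps)
    have q1: "(z + of_real y' * \<i>) + of_real s * 1 = P s y'" by (simp add: P_def algebra_simps)
    show "((\<lambda>s. dpart \<i> \<psi> (P s y')) has_real_derivative c (P s y')) (at s)"
      using dpart_line[of "dpart \<i> \<psi>" "z + of_real y' * \<i>" s 1] di[OF PS[of s y']] y' s
      unfolding e1 q1 c_def by simp
  qed
  then obtain x' where x': "0 < x'" "x' < h" "\<Delta> = h * h * c (P x' y')"
    using y' by auto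
  have "b (P x y) = c (P x' y')" using y(3) x'(3) h by simp
  moreover have "\<bar>b (P x y) - b z\<bar> < e" using Pb x y by simp
  moreover have "\<bar>c (P x' y') - c z\<bar> < e" using Pc x' y' by simp
  ultimately show False unfolding e_def by (simp add: abs_if split: if_splits)
qed



definition hf :: "(complex \<Rightarrow> real) \<Rightarrow> complex \<Rightarrow> complex" where
  "hf \<psi> x = of_real (dpart 1 \<psi> x) - \<i> * of_real (dpart \<i> \<psi> x)"

definition hf' :: "(complex \<Rightarrow> real) \<Rightarrow> complex \<Rightarrow> complex" where
  "hf' \<psi> x = of_real (dpart 1 (dpart 1 \<psi>) x) - \<i> * of_real (dpart 1 (dpart \<i> \<psi>) x)"

lemma harm_sym:
  assumes "harmonic_on S \<psi>" "x \<in> S"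
  shows "dpart \<i> (dpart 1 \<psi>) x = dpart 1 (dpart \<i> \<psi>) x"
  using assms unfolding harmonic_on_def by (intro clairaut[of S]) auto

lemma dpart_deriv:
  fixes g :: "complex \<Rightarrow> real"
  assumes "g differentiable (at x)"
  shows "(g has_derivative (\<lambda>h. Re h * dpart 1 g x + Im h * dpart \<i> g x)) (at x)"
proof -
  have L: "(g has_derivative frechet_derivative g (at x)) (at x)"
    using assms frechet_derivative_works by blast
  have "frechet_derivative g (at x) = (\<lambda>h. Re h * dpart 1 g x + Im h * dpart \<i> g x)"
  proof
    fix h show "frechet_derivative g (at x) h = Re h * dpart 1 g x + Im h * dpart \<i> g x"
      using fd_decomp[OF L, of h] unfolding dpart_def by simp
  qed
  then show ?thesis using L by simp
qed

lemma hf_deriv: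
  assumes H: "harmonic_on S \<psi>" and x: "x \<in> S"
  shows "(hf \<psi> has_field_derivative hf' \<psi> x) (at x)"
proof -
  have d1: "dpart 1 \<psi> differentiable (at x)" and di: "dpart \<i> \<psi> differentiable (at x)"
    using H x unfolding harmonic_on_def by auto
  have lap: "dpart 1 (dpart 1 \<psi>) x + dpart \<i> (dpart \<i> \<psi>) x = 0"
    using H x unfolding harmonic_on_def by auto
  have sym: "dpart \<i> (dpart 1 \<psi>) x = dpart 1 (dpart \<i> \<psi>) x" using harm_sym[OF H x] .
  have "(hf \<psi> has_derivative (\<lambda>h. of_real (Re h * dpart 1 (dpart 1 \<psi>) x + Im h * dpart \<i> (dpart 1 \<psi>) x)
        - \<i> * of_real (Re h * dpart 1 (dpart \<i> \<psi>) x + Im h * dpart \<i> (dpart \<i> \<psi>) x))) (at x)"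
    unfolding hf_def
    by (intro has_derivative_diff has_derivative_of_real has_derivative_mult_right dpart_deriv d1 di)
  moreover have "(\<lambda>h. of_real (Re h * dpart 1 (dpart 1 \<psi>) x + Im h * dpart \<i> (dpart 1 \<psi>) x)
        - \<i> * of_real (Re h * dpart 1 (dpart \<i> \<psi>) x + Im h * dpart \<i> (dpart \<i> \<psi>) x)) = (*) (hf' \<psi> x)"
  proof
    fix h
    have dd: "dpart \<i> (dpart \<i> \<psi>) x = - dpart 1 (dpart 1 \<psi>) x" using lap by simp
    show "of_real (Re h * dpart 1 (dpart 1 \<psi>) x + Im h * dpart \<i> (dpart 1 \<psi>) x)
        - \<i> * of_real (Re h * dpart 1 (dpart \<i> \<psi>) x + Im h * dpart \<i> (dpart \<i> \<psi>) x) = hf' \<psi> x * h"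
      unfolding hf'_def sym dd by (simp add: complex_eq_iff algebra_simps)
  qed
  ultimately show ?thesis unfolding has_field_derivative_def by simp
qed

lemma harm_re:
  assumes H: "harmonic_on (ball 0 1) \<psi>"
  obtains G where "\<And>x. x \<in> ball 0 1 \<Longrightarrow> (G has_field_derivative hf \<psi> x) (at x)"
     "\<And>x. x \<in> ball 0 1 \<Longrightarrow> \<psi> x = Re (G x)"
proof -
  have hol: "hf \<psi> holomorphic_on ball 0 1"
    unfolding holomorphic_on_open[OF open_ball] using hf_deriv[OF H] by blast
  have "\<exists>g. \<forall>x\<in>ball 0 1. (g has_field_derivative hf \<psi> x) (at x within ball 0 1)"
    by (rule holomorphic_convex_primitive'[OF convex_ball open_ball hol]) blast
  then obtain g where g: "\<And>x. x \<in> ball 0 1 \<Longrightarrow> (g has_field_derivative hf \<psi> x) (at x within ball 0 1)"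
    by blast
  have g': "(g has_field_derivative hf \<psi> x) (at x)" if "x \<in> ball 0 1" for x
    using g[OF that] unfolding at_within_open[OF that open_ball] .
  have "\<exists>c. \<forall>x\<in>ball 0 1. Re (g x) - \<psi> x = c"
  proof (rule has_derivative_zero_constant)
    fix x :: complex assume x: "x \<in> ball 0 1"
    have d0: "\<psi> differentiable (at x)" using H x unfolding harmonic_on_def by auto
    have D: "((\<lambda>x. Re (g x) - \<psi> x) has_derivative
       (\<lambda>h. Re (hf \<psi> x * h) - (Re h * dpart 1 \<psi> x + Im h * dpart \<i> \<psi> x))) (at x)"
      using g'[OF x] unfolding has_field_derivative_def
      by (intro has_derivative_diff has_derivative_Re dpart_deriv d0) (simp add: has_field_derivative_def)
    have E: "(\<lambda>h. Re (hf \<psi> x * h) - (Re h * dpart 1 \<psi> x + Im h * dpart \<i> \<psi> x)) = (\<lambda>h. 0)"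
    proof
      fix h
      have "Re (hf \<psi> x * h) = Re h * dpart 1 \<psi> x + Im h * dpart \<i> \<psi> x"
        unfolding hf_def by (simp add: algebra_simps)
      then show "Re (hf \<psi> x * h) - (Re h * dpart 1 \<psi> x + Im h * dpart \<i> \<psi> x) = 0" by linarith
    qed
    show "((\<lambda>x. Re (g x) - \<psi> x) has_derivative (\<lambda>h. 0)) (at x within ball 0 1)"
      using D unfolding E by (rule has_derivative_at_withinI)
  qed auto
  then obtain c where c: "\<And>x. x \<in> ball 0 1 \<Longrightarrow> Re (g x) - \<psi> x = c" by blast
  show ?thesis
  proof (rule that[of "\<lambda>x. g x - of_real c"])
    fix x :: complex assume x: "x \<in> ball 0 1"
    show "((\<lambda>x. g x - of_real c) has_field_derivative hf \<psi> x) (at x)"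
      using g'[OF x] by (auto intro!: derivative_eq_intros)
    show "\<psi> x = Re (g x - of_real c)" using c[OF x] by simp
  qed
qed



lemma cis_pow_eq: "(of_real r * cis t) ^ k = of_real (r ^ k) * cis (real k * t)"
  by (simp only: power_mult_distrib Complex.DeMoivre of_real_power)

lemma aux_field:
  fixes g X Y r R :: complex
  assumes "X \<noteq> 0" "Y \<noteq> 0" "r \<noteq> 0" "R \<noteq> 0"
  shows "g / (R * X * (r * Y)) * r * \<i> * Y = \<i> / R * (g * inverse X)"
  using assms by (simp add: field_simps)

lemma circ_cauchy:
  fixes G :: "complex \<Rightarrow> complex"
  assumes hol: "G holomorphic_on ball 0 1" and r: "0 < r" "r < 1"
  shows "((\<lambda>t. G (of_real r * cis t) * cis (- (real k * t))) has_integral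
           (2 * pi * r ^ k * (deriv ^^ k) G 0 / fact k)) {0..2*pi}"
proof -
  have sub: "cball 0 r \<subseteq> ball (0::complex) 1" using r by auto
  have cont: "continuous_on (cball 0 r) G"
    using holomorphic_on_imp_continuous_on[OF hol] sub by (rule continuous_on_subset)
  have hr: "G holomorphic_on ball 0 r" using hol by (rule holomorphic_on_subset) (use r in auto)
  have w: "(0::complex) \<in> ball 0 r" using r by simp
  have "((\<lambda>u. G u / (u - 0) ^ Suc k) has_contour_integral
          ((2 * pi * \<i>) / fact k * (deriv ^^ k) G 0)) (circlepath 0 r)"
    by (rule Cauchy_has_contour_integral_higher_derivative_circlepath[OF cont hr w])
  then have I: "((\<lambda>t. G (0 + of_real r * cis t) / (0 + of_real r * cis t - 0) ^ Suc k * of_real r * \<i> * cis t)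
      has_integral ((2 * pi * \<i>) / fact k * (deriv ^^ k) G 0)) {0..2*pi}"
    unfolding circlepath_def by (subst (asm) has_contour_integral_part_circlepath_iff) auto
  define c :: complex where "c = \<i> / of_real (r ^ k)"
  have c0: "c \<noteq> 0" using r by (simp add: c_def)
  have pt: "G (0 + of_real r * cis t) / (0 + of_real r * cis t - 0) ^ Suc k * of_real r * \<i> * cis t
        = c * (G (of_real r * cis t) * cis (- (real k * t)))" for t
  proof -
    have "(of_real r * cis t) ^ Suc k = of_real (r ^ k) * cis (real k * t) * (of_real r * cis t)"
      by (simp only: power_Suc2 cis_pow_eq)
    then have "(0 + of_real r * cis t - 0) ^ Suc k = of_real (r ^ k) * cis (real k * t) * (of_real r * cis t)"
      by simp
    moreover have "cis (- (real k * t)) = inverse (cis (real k * t))" by (simp add: cis_inverse)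
    ultimately show ?thesis using r unfolding c_def
      using aux_field[of "cis (real k * t)" "cis t" "of_real r" "of_real (r ^ k)" "G (of_real r * cis t)"]
      by (simp only: add_0_left diff_zero) simp
  qed
  have "((\<lambda>t. c * (G (of_real r * cis t) * cis (- (real k * t)))) has_integral
         ((2 * pi * \<i>) / fact k * (deriv ^^ k) G 0)) {0..2*pi}"
    using I unfolding pt .
  then have "((\<lambda>t. G (of_real r * cis t) * cis (- (real k * t))) has_integral
         ((2 * pi * \<i>) / fact k * (deriv ^^ k) G 0) / c) {0..2*pi}"
    using has_integral_mult_right_iff[OF c0] by blast
  moreover have "((2 * pi * \<i>) / fact k * (deriv ^^ k) G 0) / c = 2 * pi * r ^ k * (deriv ^^ k) G 0 / fact k"
    using r unfolding c_def by (simp add: field_simps)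
  ultimately show ?thesis by simp
qed

lemma circ_cauchy0:
  fixes G :: "complex \<Rightarrow> complex"
  assumes hol: "G holomorphic_on ball 0 1" and r: "0 < r" "r < 1"
  shows "((\<lambda>t. G (of_real r * cis t) * cis (real (Suc m) * t)) has_integral 0) {0..2*pi}"
proof -
  have hol2: "(\<lambda>u. G u * u ^ m) holomorphic_on ball 0 1"
    using hol by (intro holomorphic_intros)
  have "((\<lambda>u. G u * u ^ m) has_contour_integral 0) (circlepath 0 r)"
    by (rule Cauchy_theorem_convex_simple[OF hol2 convex_ball]) (use r in auto)
  then have I: "((\<lambda>t. G (0 + of_real r * cis t) * (0 + of_real r * cis t) ^ m * of_real r * \<i> * cis t)
      has_integral 0) {0..2*pi}"
    unfolding circlepath_def by (subst (asm) has_contour_integral_part_circlepath_iff) auto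
  define c :: complex where "c = \<i> * of_real (r ^ Suc m)"
  have c0: "c \<noteq> 0" using r by (simp add: c_def)
  have pt: "G (0 + of_real r * cis t) * (0 + of_real r * cis t) ^ m * of_real r * \<i> * cis t
        = c * (G (of_real r * cis t) * cis (real (Suc m) * t))" for t
  proof -
    have "(of_real r * cis t) ^ Suc m = of_real (r ^ Suc m) * cis (real (Suc m) * t)"
      by (rule cis_pow_eq)
    then have "(of_real r * cis t) ^ m * (of_real r * cis t) = of_real (r ^ Suc m) * cis (real (Suc m) * t)"
      by (simp only: power_Suc2)
    have "G (0 + of_real r * cis t) * (0 + of_real r * cis t) ^ m * of_real r * \<i> * cis t
        = \<i> * (G (of_real r * cis t) * ((of_real r * cis t) ^ m * (of_real r * cis t)))"
      by (simp add: algebra_simps)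
    also have "\<dots> = c * (G (of_real r * cis t) * cis (real (Suc m) * t))"
      unfolding c_def \<open>(of_real r * cis t) ^ m * (of_real r * cis t) = _\<close> by (simp only: ac_simps)
    finally show ?thesis .
  qed
  have "((\<lambda>t. c * (G (of_real r * cis t) * cis (real (Suc m) * t))) has_integral 0) {0..2*pi}"
    using I unfolding pt .
  then have "((\<lambda>t. G (of_real r * cis t) * cis (real (Suc m) * t)) has_integral 0 / c) {0..2*pi}"
    using has_integral_mult_right_iff[OF c0] by blast
  then show ?thesis by simp
qed



lemma cis_ids:
  fixes a :: complex
  shows "(Re (a * cis (-t)) + Re (a * cis t)) / 2 = Re a * cos t"
    "(Im (a * cis t) - Im (a * cis (-t))) / 2 = Re a * sin t"
    "Re a / 2 + (Re (a * cis (-(2*t))) + Re (a * cis (2*t))) / 4 = Re a * (cos t)^2"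
    "(Im (a * cis (2*t)) - Im (a * cis (-(2*t)))) / 4 = Re a * (cos t * sin t)"
  subgoal by (simp add: algebra_simps)
  subgoal by (simp add: algebra_simps)
  subgoal by (simp add: cos_double_cos) (simp add: field_simps)
  subgoal by (simp add: sin_double)
  done

lemma circ_real:
  fixes G :: "complex \<Rightarrow> complex"
  assumes hol: "G holomorphic_on ball 0 1" and r: "0 < r" "r < 1"
  shows "((\<lambda>t. Re (G (of_real r * cis t))) has_integral 2 * pi * Re (G 0)) {0..2*pi}"
    "((\<lambda>t. Re (G (of_real r * cis t)) * cos t) has_integral pi * r * Re (deriv G 0)) {0..2*pi}"
    "((\<lambda>t. Re (G (of_real r * cis t)) * sin t) has_integral - pi * r * Im (deriv G 0)) {0..2*pi}"
    "((\<lambda>t. Re (G (of_real r * cis t)) * (cos t)^2) has_integral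
        pi * Re (G 0) + pi / 4 * r^2 * Re (deriv (deriv G) 0)) {0..2*pi}"
    "((\<lambda>t. Re (G (of_real r * cis t)) * (cos t * sin t)) has_integral
        - pi / 4 * r^2 * Im (deriv (deriv G) 0)) {0..2*pi}"
proof -
  define g where "g t = G (of_real r * cis t)" for t
  have A0: "(g has_integral 2 * pi * G 0) {0..2*pi}"
    using circ_cauchy[OF hol r, of 0] by (simp add: g_def[abs_def])
  have A1: "((\<lambda>t. g t * cis (-t)) has_integral 2 * pi * r * deriv G 0) {0..2*pi}"
    using circ_cauchy[OF hol r, of 1] by (simp add: g_def)
  have A2: "((\<lambda>t. g t * cis (-(2*t))) has_integral pi * r^2 * deriv (deriv G) 0) {0..2*pi}"
    using circ_cauchy[OF hol r, of 2] by (simp add: g_def numeral_2_eq_2 mult.assoc)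
  have B1: "((\<lambda>t. g t * cis t) has_integral 0) {0..2*pi}"
    using circ_cauchy0[OF hol r, of 0] by (simp add: g_def)
  have B2: "((\<lambda>t. g t * cis (2*t)) has_integral 0) {0..2*pi}"
    using circ_cauchy0[OF hol r, of 1] by (simp add: g_def numeral_2_eq_2)
  show "((\<lambda>t. Re (G (of_real r * cis t))) has_integral 2 * pi * Re (G 0)) {0..2*pi}"
    using has_integral_Re[OF A0] by (simp add: g_def)
  have "((\<lambda>t. (Re (g t * cis (-t)) + Re (g t * cis t)) / 2) has_integral
      (Re (2 * pi * r * deriv G 0) + Re 0) / 2) {0..2*pi}"
    by (intro has_integral_divide has_integral_add has_integral_Re A1 B1)
  then show "((\<lambda>t. Re (G (of_real r * cis t)) * cos t) has_integral pi * r * Re (deriv G 0)) {0..2*pi}"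
    unfolding cis_ids g_def by (simp add: mult.assoc)
  have "((\<lambda>t. (Im (g t * cis t) - Im (g t * cis (-t))) / 2) has_integral
      (Im 0 - Im (2 * pi * r * deriv G 0)) / 2) {0..2*pi}"
    by (intro has_integral_divide has_integral_diff has_integral_Im A1 B1)
  then show "((\<lambda>t. Re (G (of_real r * cis t)) * sin t) has_integral - pi * r * Im (deriv G 0)) {0..2*pi}"
    unfolding cis_ids g_def by (simp add: mult.assoc)
  have "((\<lambda>t. Re (g t) / 2 + (Re (g t * cis (-(2*t))) + Re (g t * cis (2*t))) / 4) has_integral
      Re (2 * pi * G 0) / 2 + (Re (pi * r^2 * deriv (deriv G) 0) + Re 0) / 4) {0..2*pi}"
    by (intro has_integral_divide has_integral_add has_integral_Re A0 A2 B2)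
  then show "((\<lambda>t. Re (G (of_real r * cis t)) * (cos t)^2) has_integral
        pi * Re (G 0) + pi / 4 * r^2 * Re (deriv (deriv G) 0)) {0..2*pi}"
    unfolding cis_ids g_def by (simp add: mult.assoc)
  have "((\<lambda>t. (Im (g t * cis (2*t)) - Im (g t * cis (-(2*t)))) / 4) has_integral
      (Im 0 - Im (pi * r^2 * deriv (deriv G) 0)) / 4) {0..2*pi}"
    by (intro has_integral_divide has_integral_diff has_integral_Im A2 B2)
  then show "((\<lambda>t. Re (G (of_real r * cis t)) * (cos t * sin t)) has_integral
        - pi / 4 * r^2 * Im (deriv (deriv G) 0)) {0..2*pi}"
    unfolding cis_ids g_def by (simp add: mult.assoc)
qed



lemma circ_limit:
  fixes u :: "complex \<Rightarrow> real" and w :: "real \<Rightarrow> real" and F :: "real \<Rightarrow> real"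
  assumes cu: "continuous_on (cball 0 1) u" and cw: "continuous_on UNIV w"
    and eq: "\<And>r. 0 < r \<Longrightarrow> r < 1 \<Longrightarrow> integral {0..2*pi} (\<lambda>t. u (of_real r * cis t) * w t) = F r"
    and cF: "(F \<longlongrightarrow> L) (at_left 1)"
  shows "integral {0..2*pi} (\<lambda>t. u (cis t) * w t) = L"
proof -
  define I where "I r = integral (cbox 0 (2*pi)) (\<lambda>t. u (of_real r * cis t) * w t)" for r
  have c1: "continuous_on ({0..1} \<times> cbox 0 (2*pi)) (\<lambda>z. of_real (fst z) * cis (snd z))"
    by (intro continuous_intros)
  have img: "(\<lambda>z. of_real (fst z) * cis (snd z)) ` ({0..1} \<times> cbox 0 (2*pi)) \<subseteq> cball 0 1"
    by (auto simp: norm_mult)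
  have c2: "continuous_on ({0..1} \<times> cbox 0 (2*pi)) (\<lambda>z. u (of_real (fst z) * cis (snd z)))"
    using continuous_on_compose2[OF cu c1 img] .
  have c3: "continuous_on ({0..1} \<times> cbox 0 (2*pi)) (\<lambda>z. w (snd z))"
    by (rule continuous_on_compose2[OF cw continuous_on_snd]) auto
  have "continuous_on ({0..1} \<times> cbox 0 (2*pi)) (\<lambda>z. u (of_real (fst z) * cis (snd z)) * w (snd z))"
    using c2 c3 by (rule continuous_on_mult)
  then have "continuous_on ({0..1} \<times> cbox 0 (2*pi)) (\<lambda>(x, t). u (of_real x * cis t) * w t)"
    by (simp add: case_prod_beta)
  then have cI: "continuous_on {0..1} I"
    unfolding I_def by (rule integral_continuous_on_param)
  have "(I \<longlongrightarrow> I 1) (at 1 within {0..1})"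
    using cI by (simp add: continuous_on_def)
  then have lim1: "(I \<longlongrightarrow> I 1) (at_left 1)"
    using at_within_Icc_at_left[of 0 "1::real"] by simp
  have ev: "\<forall>\<^sub>F r in at_left 1. I r = F r"
    using eventually_at_left_real[OF zero_less_one]
    by eventually_elim (auto simp: I_def eq cbox_interval)
  have "(F \<longlongrightarrow> I 1) (at_left 1)"
    using Lim_transform_eventually[OF lim1 ev] .
  then have "I 1 = L" using cF tendsto_unique[OF trivial_limit_at_left_real] by blast
  then show ?thesis by (simp add: I_def cbox_interval)
qed



definition mob :: "complex \<Rightarrow> complex \<Rightarrow> complex" where
  "mob p z = (z + p) / (cnj p * z + 1)"

definition md :: "complex \<Rightarrow> complex \<Rightarrow> complex" where
  "md p z = (1 - cnj p * p) / (cnj p * z + 1)^2"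

definition md2 :: "complex \<Rightarrow> complex \<Rightarrow> complex" where
  "md2 p z = - 2 * cnj p * (1 - cnj p * p) / (cnj p * z + 1)^3"

lemma mob_key: "(cmod (cnj p * z + 1))^2 - (cmod (z + p))^2 = (1 - (cmod z)^2) * (1 - (cmod p)^2)"
  unfolding cmod_power2 by (simp add: power2_eq_square algebra_simps)

lemma mob_den:
  assumes "cmod p < 1" "cmod z \<le> 1"
  shows "cnj p * z + 1 \<noteq> 0"
proof
  assume "cnj p * z + 1 = 0"
  then have "cnj p * z = -1" by (simp add: eq_neg_iff_add_eq_0)
  then have "cmod p * cmod z = 1"
    by (metis complex_mod_cnj norm_minus_cancel norm_mult norm_one)
  moreover have "cmod p * cmod z \<le> cmod p" using assms(2) by (simp add: mult_left_le)
  ultimately show False using assms(1) by simp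
qed

lemma mob_norm:
  assumes p: "cmod p < 1" and z: "cmod z \<le> 1"
  shows "cmod (mob p z) \<le> 1" "cmod z < 1 \<Longrightarrow> cmod (mob p z) < 1" "cmod z = 1 \<Longrightarrow> cmod (mob p z) = 1"
proof -
  have d: "cmod (cnj p * z + 1) > 0" using mob_den[OF p z] by simp
  have k: "(cmod (z + p))^2 = (cmod (cnj p * z + 1))^2 - (1 - (cmod z)^2) * (1 - (cmod p)^2)"
    using mob_key[of p z] by simp
  have "(cmod p)^2 < 1^2" by (rule power_strict_mono[OF p norm_ge_zero]) simp
  then have pp: "1 - (cmod p)^2 > 0" by simp
  have "(cmod z)^2 \<le> 1^2" by (rule power_mono[OF z norm_ge_zero])
  then have zz: "1 - (cmod z)^2 \<ge> 0" by simp
  have m: "cmod (mob p z) = cmod (z + p) / cmod (cnj p * z + 1)"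
    by (simp add: mob_def norm_divide)
  have "(cmod (z + p))^2 \<le> (cmod (cnj p * z + 1))^2" using k pp zz by simp
  then have "cmod (z + p) \<le> cmod (cnj p * z + 1)" by (rule power2_le_imp_le) simp
  then show "cmod (mob p z) \<le> 1" using d m by simp
  show "cmod (mob p z) < 1" if "cmod z < 1"
  proof -
    have "(cmod z)^2 < 1^2" by (rule power_strict_mono[OF that norm_ge_zero]) simp
    then have "(1 - (cmod z)^2) * (1 - (cmod p)^2) > 0" using pp by simp
    then have "(cmod (z + p))^2 < (cmod (cnj p * z + 1))^2" using k by simp
    then have "cmod (z + p) < cmod (cnj p * z + 1)" by (rule power2_less_imp_less) simp
    then show ?thesis using d m by simp
  qed
  show "cmod (mob p z) = 1" if "cmod z = 1"
  proof -
    have "(cmod (z + p))^2 = (cmod (cnj p * z + 1))^2" using k that by simp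
    then have "cmod (z + p) = cmod (cnj p * z + 1)" by (simp add: power2_eq_iff_nonneg)
    then show ?thesis using d m by simp
  qed
qed

lemma mob_deriv:
  assumes "cnj p * z + 1 \<noteq> 0"
  shows "(mob p has_field_derivative md p z) (at z)"
proof -
  have "((\<lambda>z. (z + p) / (cnj p * z + 1)) has_field_derivative
     ((1 + 0) * (cnj p * z + 1) - (z + p) * (cnj p * 1 + 0)) / ((cnj p * z + 1) * (cnj p * z + 1))) (at z)"
    by (intro DERIV_divide DERIV_add DERIV_cmult DERIV_ident DERIV_const assms)
  moreover have "((1 + 0) * (cnj p * z + 1) - (z + p) * (cnj p * 1 + 0)) / ((cnj p * z + 1) * (cnj p * z + 1))
      = md p z"
    unfolding md_def by (simp add: power2_eq_square algebra_simps)
  ultimately show ?thesis unfolding mob_def[abs_def] by simp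
qed

lemma md_aux:
  fixes D K q :: complex
  assumes "D \<noteq> 0"
  shows "(0 * D^2 - K * (2 * (q * D))) / (D^2 * D^2) = - 2 * q * K / D^3"
  using assms by (simp add: field_simps power2_eq_square power3_eq_cube)

lemma md_deriv:
  assumes d: "cnj p * z + 1 \<noteq> 0"
  shows "(md p has_field_derivative md2 p z) (at z)"
proof -
  have L: "((\<lambda>x. cnj p * x + 1) has_field_derivative cnj p) (at z)"
    by (auto intro!: derivative_eq_intros)
  have P: "((\<lambda>x. (cnj p * x + 1)^2) has_field_derivative 2 * (cnj p * (cnj p * z + 1))) (at z)"
    using DERIV_power[OF L, of 2] by simp
  have "((\<lambda>x. (1 - cnj p * p) / (cnj p * x + 1)^2) has_field_derivative
     (0 * (cnj p * z + 1)^2 - (1 - cnj p * p) * (2 * (cnj p * (cnj p * z + 1))))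
       / ((cnj p * z + 1)^2 * (cnj p * z + 1)^2)) (at z)"
    by (rule DERIV_divide[OF DERIV_const P]) (simp add: d)
  moreover have "(0 * (cnj p * z + 1)^2 - (1 - cnj p * p) * (2 * (cnj p * (cnj p * z + 1))))
       / ((cnj p * z + 1)^2 * (cnj p * z + 1)^2) = md2 p z"
    unfolding md2_def by (rule md_aux[OF d])
  ultimately show ?thesis unfolding md_def[abs_def] by simp
qed



lemma mob_ball: "cmod p < 1 \<Longrightarrow> z \<in> ball 0 1 \<Longrightarrow> mob p z \<in> ball 0 1"
  using mob_norm(2)[of p z] by auto

lemma comp_derivs:
  fixes H f :: "complex \<Rightarrow> complex"
  assumes Hd: "\<And>x. x \<in> ball 0 1 \<Longrightarrow> (H has_field_derivative f x) (at x)"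
    and fd: "(f has_field_derivative f1) (at p)" and p: "cmod p < 1"
  shows "(\<lambda>z. H (mob p z)) holomorphic_on ball 0 1"
    "deriv (\<lambda>z. H (mob p z)) 0 = f p * (1 - cnj p * p)"
    "deriv (deriv (\<lambda>z. H (mob p z))) 0 = f1 * (1 - cnj p * p)^2 + f p * (- 2 * cnj p * (1 - cnj p * p))"
proof -
  define G where "G = (\<lambda>z. H (mob p z))"
  have den: "cnj p * z + 1 \<noteq> 0" if "z \<in> ball 0 1" for z
    using mob_den[OF p, of z] that by auto
  have GD: "(G has_field_derivative f (mob p z) * md p z) (at z)" if "z \<in> ball 0 1" for z
    unfolding G_def using DERIV_chain2[OF Hd[OF mob_ball[OF p that]] mob_deriv[OF den[OF that]]] .
  show "(\<lambda>z. H (mob p z)) holomorphic_on ball 0 1"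
    unfolding G_def[symmetric] holomorphic_on_open[OF open_ball] using GD by blast
  have m0: "mob p 0 = p" by (simp add: mob_def)
  have md0: "md p 0 = 1 - cnj p * p" by (simp add: md_def)
  have md20: "md2 p 0 = - 2 * cnj p * (1 - cnj p * p)" by (simp add: md2_def)
  have z0: "(0::complex) \<in> ball 0 1" by simp
  show "deriv (\<lambda>z. H (mob p z)) 0 = f p * (1 - cnj p * p)"
    unfolding G_def[symmetric] using DERIV_imp_deriv[OF GD[OF z0]] m0 md0 by simp
  have fd': "(f has_field_derivative f1) (at (mob p 0))" using fd m0 by simp
  have K: "((\<lambda>z. f (mob p z) * md p z) has_field_derivative
      (f1 * md p 0) * md p 0 + md2 p 0 * f (mob p 0)) (at 0)"
    by (rule DERIV_mult[OF DERIV_chain2[OF fd' mob_deriv] md_deriv]) (use den[OF z0] in auto)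
  have "(deriv G has_field_derivative (f1 * md p 0) * md p 0 + md2 p 0 * f (mob p 0)) (at 0)"
    by (rule has_field_derivative_transform_within_open[OF K open_ball z0])
       (use DERIV_imp_deriv[OF GD] in auto)
  then have "deriv (deriv G) 0 = (f1 * md p 0) * md p 0 + md2 p 0 * f (mob p 0)"
    by (rule DERIV_imp_deriv)
  then show "deriv (deriv (\<lambda>z. H (mob p z))) 0 = f1 * (1 - cnj p * p)^2 + f p * (- 2 * cnj p * (1 - cnj p * p))"
    unfolding G_def[symmetric] m0 md0 md20 by (simp add: power2_eq_square)
qed



theorem proposition4p3:
  fixes \<phi> :: "nat \<Rightarrow> complex \<Rightarrow> real" and \<psi> :: "complex \<Rightarrow> real" and p :: complex
  assumes "admissible_datum \<phi>"
    and "dirichlet_solution (alt_datum \<phi>) \<psi>"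
    and "p \<in> ball 0 1"
  shows "((circle_integral (\<lambda>\<zeta>. alt_datum \<phi> ((\<zeta> + p) / (cnj p * \<zeta> + 1))) = 0 \<and>
           circle_integral (\<lambda>\<zeta>. alt_datum \<phi> ((\<zeta> + p) / (cnj p * \<zeta> + 1)) * Re \<zeta>) = 0 \<and>
           circle_integral (\<lambda>\<zeta>. alt_datum \<phi> ((\<zeta> + p) / (cnj p * \<zeta> + 1)) * Im \<zeta>) = 0 \<and>
           circle_integral (\<lambda>\<zeta>. alt_datum \<phi> ((\<zeta> + p) / (cnj p * \<zeta> + 1)) * (Re \<zeta>)^2) = 0 \<and>
           circle_integral (\<lambda>\<zeta>. alt_datum \<phi> ((\<zeta> + p) / (cnj p * \<zeta> + 1)) * (Re \<zeta> * Im \<zeta>)) = 0)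
         \<longleftrightarrow>
         (\<psi> p = 0 \<and>
          dpart 1 \<psi> p = 0 \<and> dpart \<i> \<psi> p = 0 \<and>
          dpart 1 (dpart 1 \<psi>) p = 0 \<and> dpart \<i> (dpart 1 \<psi>) p = 0 \<and>
          dpart 1 (dpart \<i> \<psi>) p = 0 \<and> dpart \<i> (dpart \<i> \<psi>) p = 0))"
proof -
  have harm: "harmonic_on (ball 0 1) \<psi>" and cpsi: "continuous_on (cball 0 1) \<psi>"
    and bd: "\<And>z. z \<in> sphere 0 1 \<Longrightarrow> \<psi> z = alt_datum \<phi> z"
    using assms(2) unfolding dirichlet_solution_def by auto
  have pb: "p \<in> ball 0 1" by (rule assms(3))
  then have p: "cmod p < 1" by simp
  obtain H where Hd: "\<And>x. x \<in> ball 0 1 \<Longrightarrow> (H has_field_derivative hf \<psi> x) (at x)"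
    and Hre: "\<And>x. x \<in> ball 0 1 \<Longrightarrow> \<psi> x = Re (H x)"
    using harm_re[OF harm] by blast
  have fd: "(hf \<psi> has_field_derivative hf' \<psi> p) (at p)" by (rule hf_deriv[OF harm pb])
  define G where "G = (\<lambda>z. H (mob p z))"
  note cd = comp_derivs[OF Hd fd p, folded G_def]
  define c1 where "c1 = deriv G 0"
  define c2 where "c2 = deriv (deriv G) 0"
  define k where "k = 1 - cnj p * p"
  have Rc0: "Re (G 0) = \<psi> p" using Hre[OF pb] by (simp add: G_def mob_def)
  define u where "u z = \<psi> (mob p z)" for z
  have den: "cnj p * z + 1 \<noteq> 0" if "z \<in> cball 0 1" for z
    using mob_den[OF p, of z] that by auto
  have cmob: "continuous_on (cball 0 1) (mob p)"
    unfolding mob_def[abs_def] using den by (intro continuous_intros) auto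
  have imob: "mob p ` cball 0 1 \<subseteq> cball 0 1" using mob_norm(1)[OF p] by auto
  have cu: "continuous_on (cball 0 1) u"
    unfolding u_def using continuous_on_compose2[OF cpsi cmob imob] .
  have uG: "u (of_real r * cis t) = Re (G (of_real r * cis t))" if "0 < r" "r < 1" for r t
  proof -
    have "of_real r * cis t \<in> ball 0 1" using that by (simp add: norm_mult)
    then show ?thesis unfolding u_def G_def using Hre mob_ball[OF p] by blast
  qed
  have bdry: "alt_datum \<phi> ((cis t + p) / (cnj p * cis t + 1)) = u (cis t)" for t
  proof -
    have "mob p (cis t) \<in> sphere 0 1" using mob_norm(3)[OF p, of "cis t"] by simp
    then show ?thesis unfolding u_def using bd by (simp add: mob_def)
  qed
  have holG: "G holomorphic_on ball 0 1" using cd(1) .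
  note cr = circ_real[OF holG]
  have int_eq: "integral {0..2*pi} (\<lambda>t. u (of_real r * cis t) * w t) = V"
    if "0 < r" "r < 1" "((\<lambda>t. Re (G (of_real r * cis t)) * w t) has_integral V) {0..2*pi}" for r w V
  proof -
    have "(\<lambda>t. u (of_real r * cis t) * w t) = (\<lambda>t. Re (G (of_real r * cis t)) * w t)"
      using uG[OF that(1,2)] by simp
    then show ?thesis using integral_unique[OF that(3)] by simp
  qed
  have L1: "integral {0..2*pi} (\<lambda>t. u (cis t) * 1) = 2 * pi * Re (G 0)"
  proof (rule circ_limit[OF cu, of "\<lambda>t. 1" "\<lambda>r. 2 * pi * Re (G 0)"])
    fix r :: real assume r: "0 < r" "r < 1"
    show "integral {0..2*pi} (\<lambda>t. u (of_real r * cis t) * 1) = 2 * pi * Re (G 0)"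
      by (rule int_eq[OF r]) (use cr(1)[OF r] in simp)
  qed auto
  have L2: "integral {0..2*pi} (\<lambda>t. u (cis t) * cos t) = pi * Re c1"
  proof (rule circ_limit[OF cu, of cos "\<lambda>r. pi * r * Re c1"])
    fix r :: real assume r: "0 < r" "r < 1"
    show "integral {0..2*pi} (\<lambda>t. u (of_real r * cis t) * cos t) = pi * r * Re c1"
      by (rule int_eq[OF r]) (use cr(2)[OF r] in \<open>simp add: c1_def\<close>)
  next
    show "((\<lambda>r. pi * r * Re c1) \<longlongrightarrow> pi * Re c1) (at_left 1)"
      by (auto intro!: tendsto_eq_intros)
  qed (auto intro!: continuous_intros)
  have L3: "integral {0..2*pi} (\<lambda>t. u (cis t) * sin t) = - pi * Im c1"
  proof (rule circ_limit[OF cu, of sin "\<lambda>r. - pi * r * Im c1"])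
    fix r :: real assume r: "0 < r" "r < 1"
    show "integral {0..2*pi} (\<lambda>t. u (of_real r * cis t) * sin t) = - pi * r * Im c1"
      by (rule int_eq[OF r]) (use cr(3)[OF r] in \<open>simp add: c1_def\<close>)
  next
    show "((\<lambda>r. - pi * r * Im c1) \<longlongrightarrow> - pi * Im c1) (at_left 1)"
      by (auto intro!: tendsto_eq_intros)
  qed (auto intro!: continuous_intros)
  have L4: "integral {0..2*pi} (\<lambda>t. u (cis t) * (cos t)^2) = pi * Re (G 0) + pi / 4 * Re c2"
  proof (rule circ_limit[OF cu, of "\<lambda>t. (cos t)^2" "\<lambda>r. pi * Re (G 0) + pi / 4 * r^2 * Re c2"])
    fix r :: real assume r: "0 < r" "r < 1"
    show "integral {0..2*pi} (\<lambda>t. u (of_real r * cis t) * (cos t)^2) = pi * Re (G 0) + pi / 4 * r^2 * Re c2"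
      by (rule int_eq[OF r]) (use cr(4)[OF r] in \<open>simp add: c2_def\<close>)
  next
    show "((\<lambda>r. pi * Re (G 0) + pi / 4 * r^2 * Re c2) \<longlongrightarrow> pi * Re (G 0) + pi / 4 * Re c2) (at_left 1)"
      by (auto intro!: tendsto_eq_intros)
  qed (auto intro!: continuous_intros)
  have L5: "integral {0..2*pi} (\<lambda>t. u (cis t) * (cos t * sin t)) = - pi / 4 * Im c2"
  proof (rule circ_limit[OF cu, of "\<lambda>t. cos t * sin t" "\<lambda>r. - pi / 4 * r^2 * Im c2"])
    fix r :: real assume r: "0 < r" "r < 1"
    show "integral {0..2*pi} (\<lambda>t. u (of_real r * cis t) * (cos t * sin t)) = - pi / 4 * r^2 * Im c2"
      by (rule int_eq[OF r]) (use cr(5)[OF r] in \<open>simp add: c2_def\<close>)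
  next
    show "((\<lambda>r. - pi / 4 * r^2 * Im c2) \<longlongrightarrow> - pi / 4 * Im c2) (at_left 1)"
      by (auto intro!: tendsto_eq_intros)
  qed (auto intro!: continuous_intros)
  have E1: "circle_integral (\<lambda>\<zeta>. alt_datum \<phi> ((\<zeta> + p) / (cnj p * \<zeta> + 1))) = 2 * pi * \<psi> p"
    using L1 unfolding circle_integral_def bdry Rc0 by simp
  have E2: "circle_integral (\<lambda>\<zeta>. alt_datum \<phi> ((\<zeta> + p) / (cnj p * \<zeta> + 1)) * Re \<zeta>) = pi * Re c1"
    using L2 unfolding circle_integral_def bdry by simp
  have E3: "circle_integral (\<lambda>\<zeta>. alt_datum \<phi> ((\<zeta> + p) / (cnj p * \<zeta> + 1)) * Im \<zeta>) = - pi * Im c1"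
    using L3 unfolding circle_integral_def bdry by simp
  have E4: "circle_integral (\<lambda>\<zeta>. alt_datum \<phi> ((\<zeta> + p) / (cnj p * \<zeta> + 1)) * (Re \<zeta>)^2) = pi * \<psi> p + pi / 4 * Re c2"
    using L4 unfolding circle_integral_def bdry Rc0 by simp
  have E5: "circle_integral (\<lambda>\<zeta>. alt_datum \<phi> ((\<zeta> + p) / (cnj p * \<zeta> + 1)) * (Re \<zeta> * Im \<zeta>)) = - pi / 4 * Im c2"
    using L5 unfolding circle_integral_def bdry by simp
  have kk: "k = of_real (1 - (cmod p)^2)"
    unfolding k_def using complex_norm_square[of p] by (simp add: mult.commute)
  have "(cmod p)^2 < 1^2" by (rule power_strict_mono[OF p norm_ge_zero]) simp
  then have k0: "k \<noteq> 0" unfolding kk of_real_eq_0_iff by simp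
  have c1e: "c1 = hf \<psi> p * k" unfolding c1_def k_def using cd(2) .
  have c2e: "c2 = hf' \<psi> p * k^2 + hf \<psi> p * (- 2 * cnj p * k)" unfolding c2_def k_def using cd(3) .
  have sym: "dpart \<i> (dpart 1 \<psi>) p = dpart 1 (dpart \<i> \<psi>) p" by (rule harm_sym[OF harm pb])
  have lap: "dpart \<i> (dpart \<i> \<psi>) p = - dpart 1 (dpart 1 \<psi>) p"
    using harm pb unfolding harmonic_on_def by (auto simp: algebra_simps eq_neg_iff_add_eq_0)
  have hf0: "hf \<psi> p = 0 \<longleftrightarrow> dpart 1 \<psi> p = 0 \<and> dpart \<i> \<psi> p = 0"
    by (simp add: hf_def complex_eq_iff)
  have hf'0: "hf' \<psi> p = 0 \<longleftrightarrow> dpart 1 (dpart 1 \<psi>) p = 0 \<and> dpart 1 (dpart \<i> \<psi>) p = 0"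
    by (simp add: hf'_def complex_eq_iff)
  have A: "(2 * pi * \<psi> p = 0 \<and> pi * Re c1 = 0 \<and> - pi * Im c1 = 0 \<and> pi * \<psi> p + pi / 4 * Re c2 = 0
      \<and> - pi / 4 * Im c2 = 0) \<longleftrightarrow> (\<psi> p = 0 \<and> c1 = 0 \<and> c2 = 0)"
    by (auto simp: complex_eq_iff)
  have B: "c1 = 0 \<longleftrightarrow> hf \<psi> p = 0" using k0 c1e by simp
  have C: "hf \<psi> p = 0 \<Longrightarrow> (c2 = 0 \<longleftrightarrow> hf' \<psi> p = 0)" using k0 c2e by simp
  show ?thesis
    unfolding E1 E2 E3 E4 E5 A B sym lap
    using C hf0 hf'0 by auto
qed

end
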